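(* Let $\Gamma$ be a locally finite connected graph, let $B\subseteq\Gamma$ be finite, and let $A\in\mathcal{A}(B)$. Then the shadow $\partial A=\{\overline f\in\partial_h\Gamma:\overline f\text{ agrees with }\overline d_A\text{ on }B\}$ is nonempty if and only if $A$ is infinite.
   Context: $\Gamma$ is identified with its vertex set with path metric $d$, and $d_x(y)=d(x,y)$. $\overline F(\Gamma,\mathbb{Z})$ is the quotient of $\mathbb{Z}^\Gamma$ (product topology) by the constant functions. The horofunction boundary $\partial_h\Gamma$ is the set of limit points of $\{\overline{d_x}:x\in\Gamma\}$ in $\overline F(\Gamma,\mathbb{Z})$. Two classes agree on $B$ if representatives differ by a constant on $B$. For finite $B$ and $x\in\Gamma$, the atom of $x$ is $\{y: d_y-d_x\text{ is constant on }B\}$. $\mathcal{A}(B)$ is the set of atoms, and $\overline d_A$ is the common restriction to $B$, modulo constants, of $d_x$ for $x\in A$. *)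

theory Defs
  imports "HOL-Analysis.Analysis"
begin

text \<open>A graph on the vertex type 'a is given by an adjacency relation E
(symmetric, irreflexive). The vertex set is the whole type.\<close>

definition locally_finite_connected_graph :: "('a \<Rightarrow> 'a \<Rightarrow> bool) \<Rightarrow> bool" where
  "locally_finite_connected_graph E \<longleftrightarrow>
     (\<forall>x y. E x y \<longrightarrow> E y x) \<and> (\<forall>x. \<not> E x x) \<and>
     (\<forall>x. finite {y. E x y}) \<and> (\<forall>x y. \<exists>n. (E ^^ n) x y)"

definition gdist :: "('a \<Rightarrow> 'a \<Rightarrow> bool) \<Rightarrow> 'a \<Rightarrow> 'a \<Rightarrow> int" where
  "gdist E x y = int (LEAST n. (E ^^ n) x y)"

definition cls :: "('a \<Rightarrow> int) \<Rightarrow> ('a \<Rightarrow> int) set" where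
  "cls f = {g. \<exists>c. \<forall>y. g y = f y + c}"

text \<open>The space \<open>\<overline>F(\<Gamma>,\<int>)\<close>: quotient of \<open>\<int>^\<Gamma>\<close> (product topology of discrete
  copies of \<int>) by the constants, with the quotient topology.\<close>
definition prodZ :: "('a \<Rightarrow> int) topology" where
  "prodZ = product_topology (\<lambda>_. discrete_topology UNIV) UNIV"

definition Fbar_top :: "('a \<Rightarrow> int) set topology" where
  "Fbar_top = topology (\<lambda>U. U \<subseteq> range cls \<and> openin prodZ {f. cls f \<in> U})"

definition horo_boundary :: "('a \<Rightarrow> 'a \<Rightarrow> bool) \<Rightarrow> ('a \<Rightarrow> int) set set" where
  "horo_boundary E = Fbar_top derived_set_of {cls (gdist E x) | x. True}"

definition agree_on :: "'a set \<Rightarrow> ('a \<Rightarrow> int) set \<Rightarrow> ('a \<Rightarrow> int) set \<Rightarrow> bool" where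
  "agree_on B p q \<longleftrightarrow> (\<exists>f\<in>p. \<exists>g\<in>q. \<exists>c. \<forall>y\<in>B. f y = g y + c)"

definition atom :: "('a \<Rightarrow> 'a \<Rightarrow> bool) \<Rightarrow> 'a set \<Rightarrow> 'a \<Rightarrow> 'a set" where
  "atom E B x = {y. \<exists>c. \<forall>b\<in>B. gdist E y b - gdist E x b = c}"

definition atoms :: "('a \<Rightarrow> 'a \<Rightarrow> bool) \<Rightarrow> 'a set \<Rightarrow> 'a set set" where
  "atoms E B = {atom E B x | x. True}"

text \<open>Shadow of an atom A: boundary classes agreeing on B with \<open>\<overline>d_A\<close>, i.e. with
  \<open>\<overline>d_x\<close> for (any, equivalently some) x in A.\<close>
definition shadow :: "('a \<Rightarrow> 'a \<Rightarrow> bool) \<Rightarrow> 'a set \<Rightarrow> 'a set \<Rightarrow> ('a \<Rightarrow> int) set set" where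
  "shadow E B A = {p \<in> horo_boundary E. \<forall>x\<in>A. agree_on B p (cls (gdist E x))}"

end

theory Submission imports Defs begin

lemma topspace_prodZ[simp]: "topspace prodZ = UNIV"
  by (simp add: prodZ_def)

lemma cyl_open:
  assumes "finite F" shows "openin prodZ {k. \<forall>y\<in>F. k y = (g::'a\<Rightarrow>int) y}"
  using assms
proof (induction F rule: finite_induct)
  case empty
  then show ?case using openin_topspace[of prodZ] by simp
next
  case (insert a F)
  have "openin prodZ {k \<in> topspace prodZ. k a \<in> {g a}}"
    unfolding prodZ_def
    by (rule openin_continuous_map_preimage[OF continuous_map_product_projection]) auto
  then have "openin prodZ ({k. k a = g a} \<inter> {k. \<forall>y\<in>F. k y = g y})"
    using insert by (intro openin_Int) auto
  moreover have "{k. \<forall>y\<in>insert a F. k y = g y} = {k. k a = g a} \<inter> {k. \<forall>y\<in>F. k y = g y}" by auto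
  ultimately show ?case by simp
qed

lemma istop: "istopology (\<lambda>U. U \<subseteq> range cls \<and> openin prodZ {f. cls f \<in> U})"
  unfolding istopology_def
proof (rule conjI; intro allI impI)
  fix S T :: "('a\<Rightarrow>int) set set"
  assume "S \<subseteq> range cls \<and> openin prodZ {f. cls f \<in> S}" "T \<subseteq> range cls \<and> openin prodZ {f. cls f \<in> T}"
  then show "S \<inter> T \<subseteq> range cls \<and> openin prodZ {f. cls f \<in> S \<inter> T}"
    using openin_Int[of prodZ "{f. cls f \<in> S}" "{f. cls f \<in> T}"] by (auto simp: Int_def)
next
  fix K :: "('a\<Rightarrow>int) set set set"
  assume a: "\<forall>U\<in>K. U \<subseteq> range cls \<and> openin prodZ {f. cls f \<in> U}"
  have "{f. cls f \<in> \<Union>K} = \<Union>((\<lambda>U. {f. cls f \<in> U}) ` K)" by auto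
  then show "\<Union>K \<subseteq> range cls \<and> openin prodZ {f. cls f \<in> \<Union>K}"
    using a by (auto intro!: openin_Union)
qed

lemma openin_Fbar: "openin Fbar_top U \<longleftrightarrow> U \<subseteq> range cls \<and> openin prodZ {f. cls f \<in> U}"
  unfolding Fbar_top_def topology_inverse'[OF istop] by simp

lemma topspace_Fbar[simp]: "topspace Fbar_top = range cls"
proof -
  have "openin Fbar_top (range cls)" unfolding openin_Fbar
    using openin_topspace[of prodZ] by simp
  show ?thesis
  proof (rule antisym)
    show "topspace Fbar_top \<subseteq> range cls" unfolding topspace_def using openin_Fbar by auto
    show "range cls \<subseteq> topspace Fbar_top" using openin_subset[OF \<open>openin Fbar_top (range cls)\<close>] .
  qed
qed

lemma cls_mem[simp]: "f \<in> cls f"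
  unfolding cls_def by (auto intro: exI[of _ 0])

lemma mem_cls: "g \<in> cls f \<longleftrightarrow> (\<exists>c. \<forall>y. g y = f y + c)"
  unfolding cls_def by simp

lemma cls_eq: "cls f = cls g \<longleftrightarrow> (\<exists>c. \<forall>y. f y = g y + c)"
proof
  assume "cls f = cls g" then show "\<exists>c. \<forall>y. f y = g y + c" using cls_mem[of f] mem_cls by metis
next
  assume "\<exists>c. \<forall>y. f y = g y + c"
  then obtain c where c: "\<forall>y. f y = g y + c" by blast
  show "cls f = cls g" unfolding cls_def
  proof (auto)
    fix h c' assume "\<forall>y. h y = f y + c'" then show "\<exists>c. \<forall>y. f y + c' = g y + c"
      using c by (auto intro!: exI[of _ "c+c'"])
  next
    fix h c' assume "\<forall>y. h y = g y + c'" then show "\<exists>c. \<forall>y. g y + c' = f y + c"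
      using c by (auto intro!: exI[of _ "c'-c"])
  qed
qed

lemma cont_cls: "continuous_map prodZ Fbar_top cls"
  unfolding continuous_map_def by (auto simp: openin_Fbar)


lemma relpow_sym:
  assumes "\<forall>x y. E x y \<longrightarrow> E y x" shows "(E ^^ n) x y \<Longrightarrow> (E ^^ n) y x"
proof (induction n arbitrary: x y)
  case 0 then show ?case by simp
next
  case (Suc n)
  then obtain z where "(E ^^ n) x z" "E z y" by (meson relpowp_Suc_E)
  then show ?case using Suc.IH assms by (meson relpowp_Suc_I2)
qed

locale G =
  fixes E :: "'a \<Rightarrow> 'a \<Rightarrow> bool"
  assumes sym: "\<forall>x y. E x y \<longrightarrow> E y x" and conn: "\<forall>x y. \<exists>n. (E ^^ n) x y"
begin

lemma gdist_self[simp]: "gdist E x x = 0"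
  unfolding gdist_def by simp

lemma gdist_nonneg: "gdist E x y \<ge> 0"
  unfolding gdist_def by simp

lemma gdist_path: "(E ^^ (LEAST n. (E ^^ n) x y)) x y"
  using conn by (meson LeastI_ex)

lemma gdist_le: "(E ^^ n) x y \<Longrightarrow> gdist E x y \<le> int n"
  unfolding gdist_def by (simp add: Least_le)

lemma gdist_zero: "gdist E x y = 0 \<Longrightarrow> x = y"
  using gdist_path[of x y] unfolding gdist_def by simp

lemma gdist_tri: "gdist E x z \<le> gdist E x y + gdist E y z"
proof -
  let ?n = "LEAST n. (E ^^ n) x y" and ?m = "LEAST n. (E ^^ n) y z"
  have "(E ^^ (?n + ?m)) x z" using gdist_path[of x y] gdist_path[of y z]
    unfolding relpowp_add by blast
  then show ?thesis using gdist_le unfolding gdist_def by fastforce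
qed

lemma gdist_sym: "gdist E x y = gdist E y x"
proof -
  have "gdist E x y \<le> gdist E y x" for x y
    using gdist_le[OF relpow_sym[OF sym gdist_path[of y x]]] unfolding gdist_def by simp
  then show ?thesis by (meson antisym)
qed

lemma cls_inj: "cls (gdist E x) = cls (gdist E x') \<Longrightarrow> x = x'"
proof -
  assume "cls (gdist E x) = cls (gdist E x')"
  then obtain c where c: "\<forall>y. gdist E x y = gdist E x' y + c" by (auto simp: cls_eq)
  have "0 = gdist E x' x + c" using c[rule_format, of x] by simp
  moreover have "gdist E x x' = c" using c[rule_format, of x'] by simp
  ultimately have "gdist E x x' = 0" using gdist_nonneg[of x x'] gdist_nonneg[of x' x] by linarith
  then show ?thesis by (rule gdist_zero)
qed

end

lemma agree_open:
  assumes "finite B"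
  shows "openin Fbar_top {cls h | h. \<exists>c. \<forall>y\<in>B. h y = (f::'a\<Rightarrow>int) y + c}"
proof -
  have pre: "{h. cls h \<in> {cls h | h. \<exists>c. \<forall>y\<in>B. h y = f y + c}} = {h. \<exists>c. \<forall>y\<in>B. h y = f y + c}"
  proof safe
    fix h h' c assume "cls h = cls h'" "\<forall>y\<in>B. h' y = f y + c"
    then obtain c' where "\<forall>y. h y = h' y + c'" by (auto simp: cls_eq)
    then show "\<exists>c. \<forall>y\<in>B. h y = f y + c" using \<open>\<forall>y\<in>B. h' y = f y + c\<close>
      by (auto intro!: exI[of _ "c+c'"])
  qed auto
  have "openin prodZ {h. \<exists>c. \<forall>y\<in>B. h y = f y + c}"
  proof (subst openin_subopen, intro ballI)
    fix h assume h: "h \<in> {h. \<exists>c. \<forall>y\<in>B. h y = f y + c}"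
    show "\<exists>T. openin prodZ T \<and> h \<in> T \<and> T \<subseteq> {h. \<exists>c. \<forall>y\<in>B. h y = f y + c}"
      by (rule exI[of _ "{k. \<forall>y\<in>B. k y = h y}"]) (use h cyl_open[OF assms] in auto)
  qed
  then show ?thesis unfolding openin_Fbar pre by auto
qed

lemma t1_Fbar: "t1_space Fbar_top"
  unfolding t1_space_def
proof (intro ballI impI)
  fix p q assume "p \<in> topspace Fbar_top" "q \<in> topspace Fbar_top" "p \<noteq> q"
  then obtain f g where pq: "p = cls f" "q = cls g" by auto
  have "openin prodZ {h. cls h \<noteq> cls g}"
  proof (subst openin_subopen, intro ballI)
    fix h assume h: "h \<in> {h. cls h \<noteq> cls g}"
    obtain y2 where y2: "h y2 \<noteq> g y2 + (h undefined - g undefined)"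
      using h by (auto simp: cls_eq)
    show "\<exists>T. openin prodZ T \<and> h \<in> T \<and> T \<subseteq> {h. cls h \<noteq> cls g}"
    proof (rule exI[of _ "{k. \<forall>y\<in>{undefined,y2}. k y = h y}"], intro conjI)
      show "openin prodZ {k. \<forall>y\<in>{undefined,y2}. k y = h y}" by (rule cyl_open) simp
      show "{k. \<forall>y\<in>{undefined, y2}. k y = h y} \<subseteq> {h. cls h \<noteq> cls g}"
      proof clarify
        fix k assume k: "\<forall>y\<in>{undefined, y2}. k y = h y" "cls k = cls g"
        then obtain c where "\<forall>y. k y = g y + c" by (auto simp: cls_eq)
        then show False using k y2 by (metis add_diff_cancel_left' add.commute insertCI)
      qed
    qed simp
  qed
  then have "openin Fbar_top (range cls - {q})"
    unfolding openin_Fbar pq by (auto simp: set_diff_eq)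
  then show "\<exists>U. openin Fbar_top U \<and> p \<in> U \<and> q \<notin> U" using \<open>p \<noteq> q\<close> pq by blast
qed


theorem mainTheorem15:
  fixes E :: "'a \<Rightarrow> 'a \<Rightarrow> bool" and B A :: "'a set"
  assumes "locally_finite_connected_graph E"
    and "finite B"
    and "A \<in> atoms E B"
  shows "shadow E B A \<noteq> {} \<longleftrightarrow> infinite A"
proof -
  interpret G E using assms(1) unfolding locally_finite_connected_graph_def by unfold_locales auto
  obtain a where A: "A = atom E B a" using assms(3) unfolding atoms_def by auto
  have aA: "a \<in> A" unfolding A atom_def by auto
  have inA: "x \<in> A \<longleftrightarrow> (\<exists>c. \<forall>y\<in>B. gdist E x y = gdist E a y + c)" for x
  proof
    assume "x \<in> A"
    then obtain c where "\<forall>b\<in>B. gdist E x b - gdist E a b = c" unfolding A atom_def by blast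
    then show "\<exists>c. \<forall>y\<in>B. gdist E x y = gdist E a y + c" by (intro exI[of _ c]) auto
  next
    assume "\<exists>c. \<forall>y\<in>B. gdist E x y = gdist E a y + c"
    then obtain c where "\<forall>y\<in>B. gdist E x y = gdist E a y + c" by blast
    then show "x \<in> A" unfolding A atom_def by (intro CollectI exI[of _ c]) auto
  qed
  let ?S = "{cls (gdist E x) | x. True}"
  show ?thesis
  proof
    assume "shadow E B A \<noteq> {}"
    then obtain p where p: "p \<in> horo_boundary E" "agree_on B p (cls (gdist E a))"
      unfolding shadow_def using aA by auto
    then obtain f g c where fg: "f \<in> p" "g \<in> cls (gdist E a)" "\<forall>y\<in>B. f y = g y + c"
      unfolding agree_on_def by blast
    have "p \<in> topspace Fbar_top"
      using subsetD[OF derived_set_of_subset_topspace p(1)[unfolded horo_boundary_def]] .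
    then obtain f0 where "p = cls f0" by auto
    then have pf: "p = cls f" using fg(1) by (metis cls_eq mem_cls)
    obtain c' where c': "\<forall>y. g y = gdist E a y + c'" using fg(2) by (auto simp: mem_cls)
    let ?U = "{cls h | h. \<exists>c. \<forall>y\<in>B. h y = gdist E a y + c}"
    have U: "openin Fbar_top ?U" by (rule agree_open[OF assms(2)])
    have pU: "p \<in> ?U" unfolding pf using fg(3) c' by (auto intro!: exI[of _ "c+c'"])
    have "p \<in> {x \<in> topspace Fbar_top. \<forall>U. x \<in> U \<and> openin Fbar_top U \<longrightarrow> infinite (?S \<inter> U)}"
      using p(1) t1_space_derived_set_of_infinite_openin[THEN iffD1, OF t1_Fbar, rule_format, of ?S]
      unfolding horo_boundary_def by simp
    then have hinf: "\<forall>U. p \<in> U \<and> openin Fbar_top U \<longrightarrow> infinite (?S \<inter> U)"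
      by (simp only: mem_Collect_eq) (elim conjE, assumption)
    have "infinite (?S \<inter> ?U)" using hinf[rule_format, OF conjI[OF pU U]] .
    moreover have "?S \<inter> ?U \<subseteq> (\<lambda>x. cls (gdist E x)) ` A"
    proof
      fix t assume "t \<in> ?S \<inter> ?U"
      then have t1: "\<exists>x. t = cls (gdist E x)" and t2: "\<exists>h. t = cls h \<and> (\<exists>c. \<forall>y\<in>B. h y = gdist E a y + c)"
        by (simp_all only: Int_iff mem_Collect_eq simp_thms)
      from t1 obtain x where tx: "t = cls (gdist E x)" by (elim exE)
      from t2 obtain h c where th: "t = cls h" "\<forall>y\<in>B. h y = gdist E a y + c" by (elim exE conjE)
      note t = tx th
      have "cls (gdist E x) = cls h" using t(1) t(2) by simp
      then obtain e where "\<forall>y. gdist E x y = h y + e" unfolding cls_eq by blast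
      then have "\<forall>y\<in>B. gdist E x y = gdist E a y + (c + e)" using t(3) by simp
      then have "x \<in> A" using inA by blast
      then show "t \<in> (\<lambda>x. cls (gdist E x)) ` A" using t(1) by blast
    qed
    ultimately show "infinite A" by (meson finite_imageI finite_subset)
  next
    assume infA: "infinite A"
    let ?f = "\<lambda>x y. gdist E x y - gdist E x a"
    let ?K = "PiE UNIV (\<lambda>y. {- gdist E a y .. gdist E a y})"
    have K: "compactin prodZ ?K" unfolding prodZ_def compactin_PiE
      by (simp add: compactin_discrete_topology)
    have fK: "?f x \<in> ?K" for x
      unfolding PiE_UNIV_domain
    proof (rule Pi_I)
      fix y
      have 1: "gdist E x y \<le> gdist E x a + gdist E a y" by (rule gdist_tri)
      have 2: "gdist E x a \<le> gdist E x y + gdist E a y"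
        using gdist_tri[of x a y] gdist_sym[of y a] by linarith
      show "?f x y \<in> {- gdist E a y .. gdist E a y}"
        unfolding atLeastAtMost_iff using 1 2 by linarith
    qed
    have fcls: "cls (?f x) = cls (gdist E x)" for x by (auto simp: cls_eq)
    let ?T = "(\<lambda>x. cls (gdist E x)) ` A"
    have Tsub: "?T \<subseteq> cls ` ?K" proof
    fix t assume "t \<in> ?T"
    then obtain x where "t = cls (gdist E x)" by blast
    then show "t \<in> cls ` ?K" using fK[of x] fcls[of x] by (metis imageI)
  qed
    have "inj_on (\<lambda>x. cls (gdist E x)) A" by (meson cls_inj inj_onI)
    then have infT: "infinite ?T" using infA finite_imageD by blast
    have "compactin Fbar_top (cls ` ?K)" by (rule image_compactin[OF K cont_cls])
    then have "cls ` ?K \<inter> Fbar_top derived_set_of ?T \<noteq> {}"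
      by (rule compactin_imp_Bolzano_Weierstrass[OF _ conjI[OF infT Tsub]])
    then obtain p where pT: "p \<in> Fbar_top derived_set_of ?T"
      unfolding ex_in_conv[symmetric] by (elim exE IntE)
    have TS: "?T \<subseteq> ?S" by blast
    have hb: "p \<in> horo_boundary E" unfolding horo_boundary_def
      by (rule subsetD[OF derived_set_of_mono[OF TS] pT])
    have "p \<in> topspace Fbar_top" using subsetD[OF derived_set_of_subset_topspace pT] .
    then obtain f where pf: "p = cls f" by auto
    let ?U = "{cls h | h. \<exists>c. \<forall>y\<in>B. h y = f y + c}"
    have U: "openin Fbar_top ?U" by (rule agree_open[OF assms(2)])
    have pU: "p \<in> ?U" unfolding pf by (auto intro!: exI[of _ 0])
    have hd: "\<forall>T. p \<in> T \<and> openin Fbar_top T \<longrightarrow> (\<exists>y\<noteq>p. y \<in> ?T \<and> y \<in> T)"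
      using pT unfolding derived_set_of_def by (simp only: mem_Collect_eq) (elim conjE, assumption)
    obtain t where t: "t \<in> ?T" "t \<in> ?U" using hd[rule_format, OF conjI[OF pU U]] by (elim exE conjE)
    obtain x where x: "x \<in> A" "t = cls (gdist E x)" using t(1) by (elim imageE) simp
    have "\<exists>h. t = cls h \<and> (\<exists>c. \<forall>y\<in>B. h y = f y + c)" using t(2) by (simp only: mem_Collect_eq)
    then obtain h c where hc: "t = cls h" "\<forall>y\<in>B. h y = f y + c" by (elim exE conjE)
    have "cls (gdist E x) = cls h" using x(2) hc(1) by simp
    then obtain e where "\<forall>y. gdist E x y = h y + e" unfolding cls_eq by blast
    then have fx: "\<forall>y\<in>B. f y = gdist E x y + (- c - e)" using hc(2) by simp
    obtain c1 where c1: "\<forall>y\<in>B. gdist E x y = gdist E a y + c1" using iffD1[OF inA x(1)] by (elim exE)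
    have "agree_on B p (cls (gdist E z))" if zA: "z \<in> A" for z
    proof -
      obtain c2 where c2: "\<forall>y\<in>B. gdist E z y = gdist E a y + c2" using iffD1[OF inA zA] by (elim exE)
      have "\<forall>y\<in>B. f y = gdist E z y + (- c - e + c1 - c2)" using fx c1 c2 by auto
      then show ?thesis unfolding agree_on_def pf 
        by (intro bexI[where x=f] bexI[where x="gdist E z"] cls_mem exI[where x="- c - e + c1 - c2"])
    qed
    then have "p \<in> shadow E B A" unfolding shadow_def using hb by simp
    then show "shadow E B A \<noteq> {}" by (rule ex_in_conv[THEN iffD1, OF exI])
  qed
qed

end
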